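(* Consider the discrete-time system $x(t+1) = A x(t) + B u(t)$ with $A \in \mathbb{R}^{d_x \times d_x}$, $B \in \mathbb{R}^{d_x \times d_u}$, control constraint $\mathcal U = \{u \in \mathbb{R}^{d_u} \mid \underline u \leq u \leq \overline u\}$ (with $\underline u \leq \overline u$) and state constraint $\mathcal X = \{x \in \mathbb{R}^{d_x} \mid \underline x \leq x \leq \overline x\}$. Let $T \geq 0$ be an integer. Let $G_{\mathcal I} \in \mathbb{R}^{d_x\times n_{\mathcal I}}$, $\alpha \in \mathbb{R}^{d_x}$, $\gamma\in\mathbb{R}^{n_{\mathcal I}}$ with $\gamma \geq 0$, $\Gamma = \mathrm{diag}(\gamma)$, $\mathcal I = \langle \alpha \mid G_{\mathcal I}\Gamma\rangle$, and let $\beta(t) \in \mathbb{R}^{d_u}$, $\Phi(t) \in \mathbb{R}^{d_u \times n_{\mathcal I}}$ for $t = 0,\ldots,T-1$. Suppose that for all $t = 0,\ldots,T$ \[ A^t\alpha + \sum_{s=0}^{t-1}A^{t-1-s}B\beta(s) - \Big|A^tG_{\mathcal I}\Gamma + \sum_{s=0}^{t-1}A^{t-1-s}B\Phi(s)\Big|\mathbf{1}_{n_{\mathcal I}} \geq \underline x, \] \[ A^t\alpha + \sum_{s=0}^{t-1}A^{t-1-s}B\beta(s) + \Big|A^tG_{\mathcal I}\Gamma + \sum_{s=0}^{t-1}A^{t-1-s}B\Phi(s)\Big|\mathbf{1}_{n_{\mathcal I}} \leq \overline x, \] and that for all $t = 0,\ldots,T-1$ \[ \beta(t) - |\Phi(t)|\mathbf{1}_{n_{\mathcal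 I}} \geq \underline u, \qquad \beta(t) + |\Phi(t)|\mathbf{1}_{n_{\mathcal I}} \leq \overline u. \] Then $\mathcal I \subseteq \mathrm{Viab}_{[0,T]}(\mathcal X)$, where $\mathrm{Viab}_{[0,T]}(\mathcal X)$ is the set of $x(0) \in \mathcal X$ for which there exists an input signal with $u(t) \in \mathcal U$ for $t = 0,\ldots,T$ such that the resulting trajectory satisfies $x(t)\in\mathcal X$ for all $t = 0,\ldots,T$.
   Context: Vector inequalities are elementwise; $|M|$ is the elementwise absolute value; $\mathbf{1}_n$ is the all-ones vector in $\mathbb{R}^n$. The notation $\langle c \mid G\rangle$ denotes the zonotope $\{c + G\lambda : \lambda \in [-1,1]^n\}$. $\mathrm{diag}(\gamma)$ is the diagonal matrix with $\gamma$ on its diagonal. *)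

theory Defs
  imports "HOL-Analysis.Analysis"
begin

text \<open>Vectors in R^d are real^'d; a d1 x d2 matrix is real^'d2^'d1 (rows indexed by 'd1).
  Vector inequalities use the library's componentwise order on vec.\<close>

fun mat_pow :: "real^'n^'n \<Rightarrow> nat \<Rightarrow> real^'n^'n" where
  "mat_pow A 0 = mat 1"
| "mat_pow A (Suc k) = A ** mat_pow A k"

definition mat_abs :: "real^'n^'m \<Rightarrow> real^'n^'m" where
  "mat_abs M = (\<chi> i j. \<bar>M $ i $ j\<bar>)"

definition diag_mat :: "real^'n \<Rightarrow> real^'n^'n" where
  "diag_mat g = (\<chi> i j. if i = j then g $ i else 0)"

definition ones_vec :: "real^'n" where
  "ones_vec = (\<chi> i. 1)"

definition zonotope :: "real^'m \<Rightarrow> real^'n^'m \<Rightarrow> (real^'m) set" where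
  "zonotope c G = {c + G *v l | l. \<forall>i. -1 \<le> l $ i \<and> l $ i \<le> 1}"

fun traj :: "real^'x^'x \<Rightarrow> real^'u^'x \<Rightarrow> real^'x \<Rightarrow> (nat \<Rightarrow> real^'u) \<Rightarrow> nat \<Rightarrow> real^'x" where
  "traj A B x0 u 0 = x0"
| "traj A B x0 u (Suc t) = A *v traj A B x0 u t + B *v u t"

definition viab ::
  "real^'x^'x \<Rightarrow> real^'u^'x \<Rightarrow> real^'u \<Rightarrow> real^'u \<Rightarrow> real^'x \<Rightarrow> real^'x \<Rightarrow> nat \<Rightarrow> (real^'x) set" where
  "viab A B ulo uhi xlo xhi T =
     {x0. xlo \<le> x0 \<and> x0 \<le> xhi \<and>
          (\<exists>u :: nat \<Rightarrow> real^'u. (\<forall>t\<le>T. ulo \<le> u t \<and> u t \<le> uhi) \<and>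
               (\<forall>t\<le>T. xlo \<le> traj A B x0 u t \<and> traj A B x0 u t \<le> xhi))}"

end

theory Submission
  imports Defs
begin

lemma sum_mv: "(\<Sum>s\<in>S. M s) *v (x::real^'n) = (\<Sum>s\<in>S. M s *v x)"
  for M :: "'a \<Rightarrow> real^'n^'m"
  by (induction S rule: infinite_finite_induct) (auto simp: matrix_vector_mult_add_rdistrib)

lemma mv_sum: "(M::real^'n^'m) *v (\<Sum>s\<in>S. x s) = (\<Sum>s\<in>S. M *v x s)"
  by (induction S rule: infinite_finite_induct) (auto simp: matrix_vector_right_distrib)

lemma mat_sum: "(M::real^'n^'m) ** (\<Sum>s\<in>S. N s) = (\<Sum>s\<in>S. M ** N s)"
  for N :: "'a \<Rightarrow> real^'k^'n"
  by (induction S rule: infinite_finite_induct) (auto simp: matrix_add_ldistrib)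

lemma traj_formula:
  "traj A B x0 u t = mat_pow A t *v x0 + (\<Sum>s<t. (mat_pow A (t - 1 - s) ** B) *v u s)"
proof (induction t)
  case 0 then show ?case by (simp add: matrix_vector_mul_lid)
next
  case (Suc t)
  have e: "\<And>s. s < t \<Longrightarrow> mat_pow A (Suc t - 1 - s) = A ** mat_pow A (t - 1 - s)"
    by (metis Suc_diff_Suc diff_Suc_1 diff_diff_left mat_pow.simps(2) plus_1_eq_Suc)
  have "traj A B x0 u (Suc t) = A *v (mat_pow A t *v x0) + (\<Sum>s<t. A *v ((mat_pow A (t - 1 - s) ** B) *v u s)) + B *v u t"
    by (simp add: Suc matrix_vector_right_distrib mv_sum)
  also have "\<dots> = mat_pow A (Suc t) *v x0 + ((\<Sum>s<t. (mat_pow A (Suc t - 1 - s) ** B) *v u s) + (mat_pow A (Suc t - 1 - t) ** B) *v u t)"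
  proof -
    have "(\<Sum>s<t. A *v ((mat_pow A (t - 1 - s) ** B) *v u s)) = (\<Sum>s<t. (mat_pow A (Suc t - 1 - s) ** B) *v u s)"
    proof (rule sum.cong)
      fix s assume "s \<in> {..<t}"
      then have "mat_pow A (Suc t - 1 - s) = A ** mat_pow A (t - 1 - s)" using e by simp
      then show "A *v ((mat_pow A (t - 1 - s) ** B) *v u s) = (mat_pow A (Suc t - 1 - s) ** B) *v u s"
        by (simp only: matrix_vector_mul_assoc matrix_mul_assoc)
    qed simp
    then show ?thesis by (simp add: matrix_vector_mul_assoc matrix_mul_lid)
  qed
  finally show ?case by simp
qed

lemma abs_bound:
  fixes M :: "real^'n^'m"
  assumes "\<forall>j. -1 \<le> l $ j \<and> l $ j \<le> 1"
  shows "\<bar>(M *v l) $ i\<bar> \<le> (mat_abs M *v ones_vec) $ i"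
proof -
  have "\<bar>(M *v l) $ i\<bar> = \<bar>\<Sum>j\<in>UNIV. M$i$j * l$j\<bar>" by (simp add: matrix_vector_mult_def)
  also have "\<dots> \<le> (\<Sum>j\<in>UNIV. \<bar>M$i$j * l$j\<bar>)" by (rule sum_abs)
  also have "\<dots> \<le> (\<Sum>j\<in>UNIV. \<bar>M$i$j\<bar> * 1)"
  proof (rule sum_mono)
    fix j
    have "\<bar>l$j\<bar> \<le> 1" using assms by (simp add: abs_le_iff)
    then show "\<bar>M$i$j * l$j\<bar> \<le> \<bar>M$i$j\<bar> * 1"
      by (simp add: abs_mult mult_left_le)
  qed
  also have "\<dots> = (mat_abs M *v ones_vec) $ i"
    by (simp add: matrix_vector_mult_def mat_abs_def ones_vec_def)
  finally show ?thesis .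
qed

lemma box_bound:
  fixes M :: "real^'n^'m"
  assumes "\<forall>j. -1 \<le> l $ j \<and> l $ j \<le> 1"
    and "c - mat_abs M *v ones_vec \<ge> lo" and "c + mat_abs M *v ones_vec \<le> hi"
  shows "lo \<le> c + M *v l \<and> c + M *v l \<le> hi"
proof -
  have "\<And>i. \<bar>(M *v l) $ i\<bar> \<le> (mat_abs M *v ones_vec) $ i" using abs_bound[OF assms(1)] .
  then show ?thesis
  proof (intro conjI)
    show "lo \<le> c + M *v l" unfolding less_eq_vec_def
    proof
      fix i
      have "lo $ i \<le> c $ i - (mat_abs M *v ones_vec) $ i" using assms(2) unfolding less_eq_vec_def by simp
      moreover have "\<bar>(M *v l) $ i\<bar> \<le> (mat_abs M *v ones_vec) $ i" by fact
      ultimately show "lo $ i \<le> (c + M *v l) $ i" by (simp add: abs_le_iff)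
    qed
    show "c + M *v l \<le> hi" unfolding less_eq_vec_def
    proof
      fix i
      have "c $ i + (mat_abs M *v ones_vec) $ i \<le> hi $ i" using assms(3) unfolding less_eq_vec_def by simp
      moreover have "\<bar>(M *v l) $ i\<bar> \<le> (mat_abs M *v ones_vec) $ i" by fact
      ultimately show "(c + M *v l) $ i \<le> hi $ i" by (simp add: abs_le_iff)
    qed
  qed
qed

theorem proposition5p2:
  fixes A :: "real^'x^'x" and B :: "real^'u^'x"
    and ulo uhi :: "real^'u" and xlo xhi :: "real^'x"
    and T :: nat
    and G :: "real^'n^'x" and \<alpha> :: "real^'x" and \<gamma> :: "real^'n"
    and \<beta> :: "nat \<Rightarrow> real^'u" and \<Phi> :: "nat \<Rightarrow> real^'n^'u"
  assumes "ulo \<le> uhi"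
    and "\<gamma> \<ge> 0"
    and "\<forall>t\<le>T.
           mat_pow A t *v \<alpha> + (\<Sum>s<t. (mat_pow A (t - 1 - s) ** B) *v \<beta> s)
           - mat_abs (mat_pow A t ** G ** diag_mat \<gamma> + (\<Sum>s<t. mat_pow A (t - 1 - s) ** B ** \<Phi> s))
               *v ones_vec \<ge> xlo"
    and "\<forall>t\<le>T.
           mat_pow A t *v \<alpha> + (\<Sum>s<t. (mat_pow A (t - 1 - s) ** B) *v \<beta> s)
           + mat_abs (mat_pow A t ** G ** diag_mat \<gamma> + (\<Sum>s<t. mat_pow A (t - 1 - s) ** B ** \<Phi> s))
               *v ones_vec \<le> xhi"
    and "\<forall>t<T. \<beta> t - mat_abs (\<Phi> t) *v ones_vec \<ge> ulo \<and> \<beta> t + mat_abs (\<Phi> t) *v ones_vec \<le> uhi"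
  shows "zonotope \<alpha> (G ** diag_mat \<gamma>) \<subseteq> viab A B ulo uhi xlo xhi T"
proof
  fix x0 assume "x0 \<in> zonotope \<alpha> (G ** diag_mat \<gamma>)"
  then obtain l where x0: "x0 = \<alpha> + (G ** diag_mat \<gamma>) *v l" and l: "\<forall>i. -1 \<le> l $ i \<and> l $ i \<le> 1"
    unfolding zonotope_def by blast
  define u where "u = (\<lambda>t. if t < T then \<beta> t + \<Phi> t *v l else ulo)"
  have U: "\<forall>t\<le>T. ulo \<le> u t \<and> u t \<le> uhi"
  proof (intro allI impI)
    fix t assume "t \<le> T"
    show "ulo \<le> u t \<and> u t \<le> uhi"
    proof (cases "t < T")
      case True
      then show ?thesis unfolding u_def using box_bound[OF l, where c="\<beta> t" and M="\<Phi> t" and lo=ulo and hi=uhi] assms(5) by simp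
    qed (simp add: u_def assms(1))
  qed
  have X: "xlo \<le> traj A B x0 u t \<and> traj A B x0 u t \<le> xhi" if "t \<le> T" for t
  proof -
    have us: "\<And>s. s < t \<Longrightarrow> u s = \<beta> s + \<Phi> s *v l" using that unfolding u_def by auto
    have "traj A B x0 u t = mat_pow A t *v x0 + (\<Sum>s<t. (mat_pow A (t - 1 - s) ** B) *v (\<beta> s + \<Phi> s *v l))"
      by (simp add: traj_formula us)
    also have "\<dots> = (mat_pow A t *v \<alpha> + (\<Sum>s<t. (mat_pow A (t - 1 - s) ** B) *v \<beta> s))
       + (mat_pow A t ** G ** diag_mat \<gamma> + (\<Sum>s<t. mat_pow A (t - 1 - s) ** B ** \<Phi> s)) *v l"
      by (simp add: x0 matrix_vector_right_distrib matrix_vector_mult_add_rdistrib sum.distrib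
          sum_mv matrix_vector_mul_assoc matrix_mul_assoc)
    finally show ?thesis using box_bound[OF l, where c="mat_pow A t *v \<alpha> + (\<Sum>s<t. (mat_pow A (t - 1 - s) ** B) *v \<beta> s)"
       and M="mat_pow A t ** G ** diag_mat \<gamma> + (\<Sum>s<t. mat_pow A (t - 1 - s) ** B ** \<Phi> s)" and lo=xlo and hi=xhi]
       assms(3,4) that by simp
  qed
  have "xlo \<le> x0 \<and> x0 \<le> xhi" using X[of 0] by simp
  then show "x0 \<in> viab A B ulo uhi xlo xhi T"
    unfolding viab_def using U X by blast
qed

end
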